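(* Let $\beta>0$ and $\alpha\in(-1,1)$. Define $\rho_\alpha$ on $\{\pm1\}^2$ by $\rho_\alpha(s,t)=\frac{1+\alpha}{4}$ if $s=t$ and $\rho_\alpha(s,t)=\frac{1-\alpha}{4}$ if $s\ne t$. For a probability distribution $\mu$ on $\{\pm1\}^4$ (with coordinates $(\sigma_1,\tau_1,\sigma_2,\tau_2)$) let \[ g(\mu,\rho_\alpha)=D_{\mathrm{KL}}(\mu\,\|\,\rho_\alpha\otimes\rho_\alpha)+\beta\sum_{x\in A_1}\mu(x)+2\beta\sum_{x\in A_2}\mu(x), \] where $A_1=\{x:\sigma_1=\sigma_2,\tau_1\neq\tau_2\}\cup\{x:\sigma_1\neq\sigma_2,\tau_1=\tau_2\}$, $A_2=\{x:\sigma_1=\sigma_2,\tau_1=\tau_2\}$, and $(\rho_\alpha\otimes\rho_\alpha)(\sigma_1,\tau_1,\sigma_2,\tau_2)=\rho_\alpha(\sigma_1,\tau_1)\rho_\alpha(\sigma_2,\tau_2)$. Let $\mu^*$ be the minimizer of $g(\cdot,\rho_\alpha)$ over all probability distributions $\mu$ on $\{\pm1\}^4$ satisfying $\sum_{(\sigma_2,\tau_2)}\mu(\sigma_1,\tau_1,\sigma_2,\tau_2)=\rho_\alpha(\sigma_1,\tau_1)$ for all $(\sigma_1,\tau_1)$ and $\sum_{(\sigma_1,\tau_1)}\mu(\sigma_1,\tau_1,\sigma_2,\tau_2)=\rho_\alpha(\sigma_2,\tau_2)$ for all $(\sigma_2,\tau_2)$. Then, with $z=\sqrt{(1+e^{-2\beta})^2-\alpha^2(1-e^{-2\beta})^2}$,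 \begin{align*} g(\mu^*,\rho_\alpha)&=2\log2-\log\big((1+e^{-2\beta})(1-e^{-2\beta})^2\big)-(1+\alpha)\log(1+\alpha)-(1-\alpha)\log(1-\alpha)\\ &\quad+\frac{1+\alpha}{2}\log\Big((1+e^{-2\beta})^2+\alpha(1-e^{-2\beta})^2-2e^{-\beta}z\Big)+\frac{1-\alpha}{2}\log\Big((1+e^{-2\beta})^2-\alpha(1-e^{-2\beta})^2-2e^{-\beta}z\Big). \end{align*}
   Context: $D_{\mathrm{KL}}(\mu\|\nu)=\sum_\omega\mu(\omega)\log\frac{\mu(\omega)}{\nu(\omega)}$ with the convention $0\log 0=0$. *)

theory Defs
  imports Complex_Main
begin

text \<open>Spins in {+1,-1} are encoded as bool (True = +1, False = -1); only (in)equality of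
spins matters. A point of {+1,-1}^4 is (sigma1, tau1, sigma2, tau2).\<close>

type_synonym spin4 = "bool \<times> bool \<times> bool \<times> bool"

definition rho :: "real \<Rightarrow> bool \<Rightarrow> bool \<Rightarrow> real" where
  "rho \<alpha> s t = (if s = t then (1 + \<alpha>) / 4 else (1 - \<alpha>) / 4)"

definition rho_prod :: "real \<Rightarrow> spin4 \<Rightarrow> real" where
  "rho_prod \<alpha> x = (case x of (s1, t1, s2, t2) \<Rightarrow> rho \<alpha> s1 t1 * rho \<alpha> s2 t2)"

definition DKL :: "(spin4 \<Rightarrow> real) \<Rightarrow> (spin4 \<Rightarrow> real) \<Rightarrow> real" where
  "DKL \<mu> \<nu> = (\<Sum>\<omega>\<in>UNIV. if \<mu> \<omega> = 0 then 0 else \<mu> \<omega> * ln (\<mu> \<omega> / \<nu> \<omega>))"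

definition A1 :: "spin4 set" where
  "A1 = {(s1, t1, s2, t2). s1 = s2 \<and> t1 \<noteq> t2} \<union> {(s1, t1, s2, t2). s1 \<noteq> s2 \<and> t1 = t2}"

definition A2 :: "spin4 set" where
  "A2 = {(s1, t1, s2, t2). s1 = s2 \<and> t1 = t2}"

definition gfun :: "real \<Rightarrow> real \<Rightarrow> (spin4 \<Rightarrow> real) \<Rightarrow> real" where
  "gfun \<beta> \<alpha> \<mu> = DKL \<mu> (rho_prod \<alpha>) + \<beta> * (\<Sum>x\<in>A1. \<mu> x) + 2 * \<beta> * (\<Sum>x\<in>A2. \<mu> x)"

definition coupling :: "real \<Rightarrow> (spin4 \<Rightarrow> real) \<Rightarrow> bool" where
  "coupling \<alpha> \<mu> \<longleftrightarrow>
     (\<forall>x. 0 \<le> \<mu> x) \<and> (\<Sum>x\<in>UNIV. \<mu> x) = 1 \<and>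
     (\<forall>s1 t1. (\<Sum>p\<in>(UNIV :: (bool \<times> bool) set). \<mu> (s1, t1, fst p, snd p)) = rho \<alpha> s1 t1) \<and>
     (\<forall>s2 t2. (\<Sum>p\<in>(UNIV :: (bool \<times> bool) set). \<mu> (fst p, snd p, s2, t2)) = rho \<alpha> s2 t2)"

end

theory Submission
  imports Defs
begin

lemma core:
  fixes E a D G z X1 X0 :: real
  assumes E: "0 < E" "E < 1" and a: "-1 < a" "a < 1"
    and D: "D = 1 + E^2" and G: "G = (1 - E^2)^2"
    and z: "z = sqrt (D^2 - a^2 * G)"
    and X1: "X1 = D^2 + a*G - 2*E*z" and X0: "X0 = D^2 - a*G - 2*E*z"
  shows "X1 > 0" "X0 > 0"
    "sqrt (X1/(4*D*G))^2 * D + 2*E*(sqrt (X1/(4*D*G)) * sqrt (X0/(4*D*G))) = (1+a)/4"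
    "sqrt (X0/(4*D*G))^2 * D + 2*E*(sqrt (X1/(4*D*G)) * sqrt (X0/(4*D*G))) = (1-a)/4"
proof -
  have Dp: "D > 0" using D by (simp add: add_pos_nonneg)
  have E2: "E^2 < 1" using E by (simp add: power_less_one_iff)
  have Gp: "G > 0" using G E2 by simp
  have DG: "D^2 - G = 4*E^2" unfolding D G by algebra
  have a2: "a^2 < 1" using a by (simp add: abs_less_iff power2_less_1_iff less_le_trans)
  have rad: "D^2 - a^2*G > 4*E^2"
  proof -
    have "a^2 * G < G" using a2 Gp by simp
    thus ?thesis using DG by linarith
  qed
  have rad0: "D^2 - a^2*G \<ge> 0" using rad by (smt (verit) zero_le_power2)
  hence z2: "z^2 = D^2 - a^2*G" using z by simp
  have zge: "z \<ge> 0" using z rad0 by simp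
  have z2E: "z > 2*E"
  proof -
    have "(2*E)^2 < z^2" using z2 rad by (simp add: power_mult_distrib)
    thus ?thesis using zge E by (smt (verit) power_mono)
  qed
  have sq4: "(2*E*z)^2 = (D^2 - G)*(D^2 - a^2*G)"
  proof -
    have "(2*E*z)^2 = 4*E^2*z^2" by (simp add: power_mult_distrib)
    also have "... = (D^2 - G)*(D^2 - a^2*G)" using DG z2 by simp
    finally show ?thesis .
  qed
  have id1: "(D^2 + a*G)^2 - (2*E*z)^2 = G*D^2*(1+a)^2"
    unfolding sq4 by (simp add: algebra_simps power2_eq_square)
  have id0: "(D^2 - a*G)^2 - (2*E*z)^2 = G*D^2*(1-a)^2"
    unfolding sq4 by (simp add: algebra_simps power2_eq_square)
  have aG: "\<bar>a*G\<bar> < G" using a Gp by (simp add: abs_mult abs_less_iff)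
  have EG: "4*E^2 > 0" using E by simp
  have p1: "D^2 + a*G > 0" using DG aG EG by linarith
  have p0: "D^2 - a*G > 0" using DG aG EG by linarith
  have Ez: "2*E*z \<ge> 0" using E zge by simp
  have "G*D^2*(1+a)^2 > 0" using Gp Dp a by simp
  hence "(2*E*z)^2 < (D^2 + a*G)^2" using id1 by linarith
  hence "2*E*z < D^2 + a*G" using p1 Ez by (meson power_less_imp_less_base less_le)
  thus X1p: "X1 > 0" using X1 by simp
  have "G*D^2*(1-a)^2 > 0" using Gp Dp a by simp
  hence "(2*E*z)^2 < (D^2 - a*G)^2" using id0 by linarith
  hence "2*E*z < D^2 - a*G" using p0 Ez by (meson power_less_imp_less_base less_le)
  thus X0p: "X0 > 0" using X0 by simp
  have prod: "X1 * X0 = (D*(z - 2*E))^2"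
  proof -
    have "X1 * X0 = (D^2 - 2*E*z)^2 - a^2*G^2" unfolding X1 X0 by (simp add: algebra_simps power2_eq_square)
    also have "... = (D*(z - 2*E))^2" using z2 DG by algebra
    finally show ?thesis .
  qed
  have DGp: "4*D*G > 0" using Dp Gp by simp
  have w1w0: "sqrt (X1/(4*D*G)) * sqrt (X0/(4*D*G)) = D*(z-2*E)/(4*D*G)"
  proof -
    have "sqrt (X1/(4*D*G)) * sqrt (X0/(4*D*G)) = sqrt ((X1*X0)/(4*D*G)^2)"
      by (simp add: real_sqrt_mult[symmetric] power2_eq_square)
    also have "... = sqrt (X1*X0) / (4*D*G)" using DGp by (simp add: real_sqrt_divide)
    also have "sqrt (X1*X0) = D*(z-2*E)" unfolding prod using Dp z2E by simp
    finally show ?thesis .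
  qed
  have h1: "X1 = G + a*G + 4*E^2 - 2*E*z" using X1 DG by simp
  have h0: "X0 = G - a*G + 4*E^2 - 2*E*z" using X0 DG by simp
  have s1: "sqrt (X1/(4*D*G))^2 = X1/(4*D*G)" using X1p DGp by simp
  have s0: "sqrt (X0/(4*D*G))^2 = X0/(4*D*G)" using X0p DGp by simp
  have "X1/(4*D*G)*D + 2*E*(D*(z-2*E)/(4*D*G)) = (1+a)/4"
    unfolding h1 using Dp Gp by (simp add: field_simps) (simp add: algebra_simps power2_eq_square)
  thus "sqrt (X1/(4*D*G))^2 * D + 2*E*(sqrt (X1/(4*D*G)) * sqrt (X0/(4*D*G))) = (1+a)/4"
    by (simp only: w1w0 s1)
  have "X0/(4*D*G)*D + 2*E*(D*(z-2*E)/(4*D*G)) = (1-a)/4"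
    unfolding h0 using Dp Gp by (simp add: field_simps) (simp add: algebra_simps power2_eq_square)
  thus "sqrt (X0/(4*D*G))^2 * D + 2*E*(sqrt (X1/(4*D*G)) * sqrt (X0/(4*D*G))) = (1-a)/4"
    by (simp only: w1w0 s0)
qed

lemma sum_UNIV_bool: "(\<Sum>x\<in>(UNIV::bool set). f x) = f True + f False"
  by (simp add: UNIV_bool add.commute)
lemma sum_UNIV_prod: "(\<Sum>x\<in>(UNIV::('a::finite \<times> 'b::finite) set). f x) = (\<Sum>a\<in>UNIV. \<Sum>b\<in>UNIV. f (a,b))"
  by (simp add: UNIV_Times_UNIV[symmetric] sum.cartesian_product del: UNIV_Times_UNIV)
lemma sum_set_UNIV: "sum f (A::spin4 set) = (\<Sum>x\<in>UNIV. if x \<in> A then f x else 0)"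
  using sum.inter_restrict[of UNIV f A] by simp

definition Wf :: "real \<Rightarrow> real \<Rightarrow> bool \<Rightarrow> bool \<Rightarrow> real" where
  "Wf w1 w0 s t = (if s = t then w1 else w0)"
definition cost :: "real \<Rightarrow> spin4 \<Rightarrow> real" where
  "cost \<beta> x = \<beta> * (if x \<in> A1 then 1 else 0) + 2*\<beta>*(if x \<in> A2 then 1 else 0)"
definition mstar :: "real \<Rightarrow> real \<Rightarrow> real \<Rightarrow> spin4 \<Rightarrow> real" where
  "mstar \<beta> w1 w0 x = (case x of (s1,t1,s2,t2) \<Rightarrow> Wf w1 w0 s1 t1 * Wf w1 w0 s2 t2 * exp (- cost \<beta> x))"
definition Lg :: "real \<Rightarrow> real \<Rightarrow> real \<Rightarrow> bool \<Rightarrow> bool \<Rightarrow> real" where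
  "Lg \<alpha> w1 w0 s t = ln (Wf w1 w0 s t / rho \<alpha> s t)"
definition hfun :: "real \<Rightarrow> real \<Rightarrow> real \<Rightarrow> spin4 \<Rightarrow> real" where
  "hfun \<alpha> w1 w0 x = (case x of (s1,t1,s2,t2) \<Rightarrow> Lg \<alpha> w1 w0 s1 t1 + Lg \<alpha> w1 w0 s2 t2)"
definition Tf :: "real \<Rightarrow> real \<Rightarrow> (spin4 \<Rightarrow> real) \<Rightarrow> spin4 \<Rightarrow> real" where
  "Tf \<beta> \<alpha> \<mu> x = (if \<mu> x = 0 then 0 else \<mu> x * ln (\<mu> x / rho_prod \<alpha> x)) + \<mu> x * cost \<beta> x"

lemma gfun_eq: "gfun \<beta> \<alpha> \<mu> = (\<Sum>x\<in>UNIV. Tf \<beta> \<alpha> \<mu> x)"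
proof -
  have "(\<Sum>x\<in>UNIV. Tf \<beta> \<alpha> \<mu> x) = DKL \<mu> (rho_prod \<alpha>) + (\<Sum>x\<in>UNIV. \<mu> x * cost \<beta> x)"
    unfolding Tf_def DKL_def by (simp add: sum.distrib)
  also have "(\<Sum>x\<in>UNIV. \<mu> x * cost \<beta> x) = \<beta> * (\<Sum>x\<in>A1. \<mu> x) + 2 * \<beta> * (\<Sum>x\<in>A2. \<mu> x)"
  proof -
    have "\<And>x. \<mu> x * cost \<beta> x = \<beta> * (if x \<in> A1 then \<mu> x else 0) + 2*\<beta>*(if x \<in> A2 then \<mu> x else 0)"
      by (simp add: cost_def)
    thus ?thesis unfolding sum_set_UNIV[of _ A1] sum_set_UNIV[of _ A2]
      by (simp add: sum.distrib sum_distrib_left)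
  qed
  finally show ?thesis unfolding gfun_def by simp
qed

lemma rho_pos: "-1 < \<alpha> \<Longrightarrow> \<alpha> < 1 \<Longrightarrow> rho \<alpha> s t > 0"
  unfolding rho_def by auto

lemma mstar_alt:
  assumes "-1 < \<alpha>" "\<alpha> < 1"
  shows "mstar \<beta> w1 w0 (s1,t1,s2,t2) = (Wf w1 w0 s1 t1 / rho \<alpha> s1 t1) * (Wf w1 w0 s2 t2 / rho \<alpha> s2 t2)
      * rho_prod \<alpha> (s1,t1,s2,t2) * exp (- cost \<beta> (s1,t1,s2,t2))"
  using rho_pos[OF assms, of s1 t1] rho_pos[OF assms, of s2 t2]
  unfolding mstar_def rho_prod_def by (simp add: field_simps)

lemma pointwise:
  assumes a: "-1 < \<alpha>" "\<alpha> < 1" and w: "w1 > 0" "w0 > 0" and m: "\<mu> x \<ge> 0"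
  shows "Tf \<beta> \<alpha> \<mu> x \<ge> \<mu> x * hfun \<alpha> w1 w0 x + \<mu> x - mstar \<beta> w1 w0 x"
    and "Tf \<beta> \<alpha> (mstar \<beta> w1 w0) x = mstar \<beta> w1 w0 x * hfun \<alpha> w1 w0 x"
proof -
  obtain s1 t1 s2 t2 where x: "x = (s1,t1,s2,t2)" by (cases x) auto
  define u1 where "u1 = Wf w1 w0 s1 t1 / rho \<alpha> s1 t1"
  define u2 where "u2 = Wf w1 w0 s2 t2 / rho \<alpha> s2 t2"
  have Wp: "\<And>s t. Wf w1 w0 s t > 0" using w unfolding Wf_def by auto
  have u1p: "u1 > 0" unfolding u1_def using Wp rho_pos[OF a] by simp
  have u2p: "u2 > 0" unfolding u2_def using Wp rho_pos[OF a] by simp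
  have nup: "rho_prod \<alpha> x > 0" unfolding x rho_prod_def using rho_pos[OF a] by simp
  have ms: "mstar \<beta> w1 w0 x = u1 * u2 * rho_prod \<alpha> x * exp (- cost \<beta> x)"
    unfolding x u1_def u2_def using mstar_alt[OF a] by simp
  have msp: "mstar \<beta> w1 w0 x > 0" unfolding ms using u1p u2p nup by simp
  have h: "hfun \<alpha> w1 w0 x = ln u1 + ln u2" unfolding x hfun_def Lg_def u1_def u2_def by simp
  have key: "\<And>m. m > 0 \<Longrightarrow> ln (m / rho_prod \<alpha> x) + cost \<beta> x = ln (m / mstar \<beta> w1 w0 x) + ln u1 + ln u2"
  proof -
    fix m :: real assume mp: "m > 0"
    have "ln (m / mstar \<beta> w1 w0 x) = ln m - ln u1 - ln u2 - ln (rho_prod \<alpha> x) + cost \<beta> x"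
      unfolding ms using mp u1p u2p nup by (simp add: ln_div ln_mult)
    moreover have "ln (m / rho_prod \<alpha> x) = ln m - ln (rho_prod \<alpha> x)" using mp nup by (simp add: ln_div)
    ultimately show "ln (m / rho_prod \<alpha> x) + cost \<beta> x = ln (m / mstar \<beta> w1 w0 x) + ln u1 + ln u2" by simp
  qed
  show "Tf \<beta> \<alpha> \<mu> x \<ge> \<mu> x * hfun \<alpha> w1 w0 x + \<mu> x - mstar \<beta> w1 w0 x"
  proof (cases "\<mu> x = 0")
    case True thus ?thesis unfolding Tf_def using msp by simp
  next
    case False
    hence mp: "\<mu> x > 0" using m by simp
    have "ln (mstar \<beta> w1 w0 x / \<mu> x) \<le> mstar \<beta> w1 w0 x / \<mu> x - 1"
      using ln_le_minus_one[of "mstar \<beta> w1 w0 x / \<mu> x"] msp mp by simp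
    moreover have "ln (mstar \<beta> w1 w0 x / \<mu> x) = - ln (\<mu> x / mstar \<beta> w1 w0 x)"
      using msp mp by (simp add: ln_div)
    ultimately have "\<mu> x * ln (\<mu> x / mstar \<beta> w1 w0 x) \<ge> \<mu> x * (1 - mstar \<beta> w1 w0 x / \<mu> x)"
      using mp by (intro mult_left_mono) auto
    hence "\<mu> x * ln (\<mu> x / mstar \<beta> w1 w0 x) \<ge> \<mu> x - mstar \<beta> w1 w0 x"
      using mp by (simp add: algebra_simps)
    moreover have "Tf \<beta> \<alpha> \<mu> x = \<mu> x * (ln (\<mu> x / mstar \<beta> w1 w0 x) + ln u1 + ln u2)"
    proof -
      have "\<mu> x * (ln (\<mu> x / rho_prod \<alpha> x) + cost \<beta> x) = \<mu> x * (ln (\<mu> x / mstar \<beta> w1 w0 x) + ln u1 + ln u2)"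
        by (simp only: key[OF mp])
      thus ?thesis unfolding Tf_def using False by (simp add: algebra_simps)
    qed
    ultimately show ?thesis unfolding h by (simp add: algebra_simps)
  qed
  show "Tf \<beta> \<alpha> (mstar \<beta> w1 w0) x = mstar \<beta> w1 w0 x * hfun \<alpha> w1 w0 x"
  proof -
    have "mstar \<beta> w1 w0 x * (ln (mstar \<beta> w1 w0 x / rho_prod \<alpha> x) + cost \<beta> x) = mstar \<beta> w1 w0 x * (ln u1 + ln u2)"
      using key[OF msp] msp by simp
    thus ?thesis unfolding Tf_def h using msp by (simp add: algebra_simps)
  qed
qed


lemma marg_sum:
  assumes "coupling \<alpha> \<mu>"
  shows "(\<Sum>x\<in>UNIV. \<mu> x * hfun \<alpha> w1 w0 x) =
    2 * (Lg \<alpha> w1 w0 True True * rho \<alpha> True True + Lg \<alpha> w1 w0 True False * rho \<alpha> True False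
       + Lg \<alpha> w1 w0 False True * rho \<alpha> False True + Lg \<alpha> w1 w0 False False * rho \<alpha> False False)"
proof -
  have "(\<Sum>x\<in>UNIV. \<mu> x * hfun \<alpha> w1 w0 x) =
     (\<Sum>p\<in>UNIV. Lg \<alpha> w1 w0 (fst p) (snd p) * (\<Sum>q\<in>(UNIV::(bool\<times>bool) set). \<mu> (fst p, snd p, fst q, snd q)))
   + (\<Sum>q\<in>UNIV. Lg \<alpha> w1 w0 (fst q) (snd q) * (\<Sum>p\<in>(UNIV::(bool\<times>bool) set). \<mu> (fst p, snd p, fst q, snd q)))"
    by (simp only: sum_UNIV_prod sum_UNIV_bool hfun_def fst_conv snd_conv prod.case) (simp add: algebra_simps)
  also have "... = 2 * (Lg \<alpha> w1 w0 True True * rho \<alpha> True True + Lg \<alpha> w1 w0 True False * rho \<alpha> True False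
       + Lg \<alpha> w1 w0 False True * rho \<alpha> False True + Lg \<alpha> w1 w0 False False * rho \<alpha> False False)"
    using assms unfolding coupling_def
    by (simp only: sum_UNIV_prod[of "\<lambda>p. Lg \<alpha> w1 w0 (fst p) (snd p) * _"] sum_UNIV_bool fst_conv snd_conv) (simp, simp add: sum_UNIV_prod sum_UNIV_bool)
  finally show ?thesis .
qed

lemma mstar_coupling:
  assumes a: "-1 < \<alpha>" "\<alpha> < 1" and w: "w1 > 0" "w0 > 0"
    and E1: "exp (-\<beta>) = E" and E2: "exp (-(2*\<beta>)) = E^2"
    and eq1: "w1^2 * (1 + E^2) + 2*E*(w1*w0) = (1+\<alpha>)/4"
    and eq0: "w0^2 * (1 + E^2) + 2*E*(w1*w0) = (1-\<alpha>)/4"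
  shows "coupling \<alpha> (mstar \<beta> w1 w0)"
proof -
  have nn: "\<forall>x. 0 \<le> mstar \<beta> w1 w0 x" using w unfolding mstar_def Wf_def by (auto split: prod.splits)
  have e1: "8*(E*(w0*w1)) + (w1*w1*E^2*4 + w1*w1*4) = 1+\<alpha>" using eq1 by (simp add: algebra_simps power2_eq_square)
  have e0: "8*(E*(w0*w1)) + (w0*w0*E^2*4 + w0*w0*4) = 1-\<alpha>" using eq0 by (simp add: algebra_simps power2_eq_square)
  have m1: "\<forall>s1 t1. (\<Sum>p\<in>(UNIV :: (bool \<times> bool) set). mstar \<beta> w1 w0 (s1, t1, fst p, snd p)) = rho \<alpha> s1 t1"
    apply (intro allI)
    subgoal for s1 t1
    apply (cases s1; cases t1)
    apply (simp_all add: sum_UNIV_prod sum_UNIV_bool mstar_def Wf_def cost_def A1_def A2_def rho_def E1 E2)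
    using e1 e0 by (simp_all add: algebra_simps)
    done
  have m2: "\<forall>s2 t2. (\<Sum>p\<in>(UNIV :: (bool \<times> bool) set). mstar \<beta> w1 w0 (fst p, snd p, s2, t2)) = rho \<alpha> s2 t2"
    apply (intro allI)
    subgoal for s2 t2
    apply (cases s2; cases t2)
    apply (simp_all add: sum_UNIV_prod sum_UNIV_bool mstar_def Wf_def cost_def A1_def A2_def rho_def E1 E2)
    using e1 e0 by (simp_all add: algebra_simps)
    done
  have tot: "(\<Sum>x\<in>UNIV. mstar \<beta> w1 w0 x) = 1"
    apply (simp add: sum_UNIV_prod sum_UNIV_bool mstar_def Wf_def cost_def A1_def A2_def rho_def E1 E2)
    using e1 e0 by (simp add: algebra_simps)
  show ?thesis unfolding coupling_def using nn m1 m2 tot by blast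
qed
theorem lemma8p2:
  fixes \<beta> \<alpha> :: real
  assumes "\<beta> > 0" and "-1 < \<alpha>" and "\<alpha> < 1"
  defines "z \<equiv> sqrt ((1 + exp (-2*\<beta>))^2 - \<alpha>^2 * (1 - exp (-2*\<beta>))^2)"
  defines "F \<equiv> 2 * ln 2 - ln ((1 + exp (-2*\<beta>)) * (1 - exp (-2*\<beta>))^2)
      - (1 + \<alpha>) * ln (1 + \<alpha>) - (1 - \<alpha>) * ln (1 - \<alpha>)
      + (1 + \<alpha>) / 2 * ln ((1 + exp (-2*\<beta>))^2 + \<alpha> * (1 - exp (-2*\<beta>))^2 - 2 * exp (-\<beta>) * z)
      + (1 - \<alpha>) / 2 * ln ((1 + exp (-2*\<beta>))^2 - \<alpha> * (1 - exp (-2*\<beta>))^2 - 2 * exp (-\<beta>) * z)"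
  shows "(\<exists>\<mu>. coupling \<alpha> \<mu> \<and> gfun \<beta> \<alpha> \<mu> = F) \<and> (\<forall>\<mu>. coupling \<alpha> \<mu> \<longrightarrow> F \<le> gfun \<beta> \<alpha> \<mu>)"
proof -
  note zdef = assms(4) and Fdef = assms(5)
  define E where "E = exp (-\<beta>)"
  have E0: "0 < E" unfolding E_def by simp
  have E1: "E < 1" unfolding E_def using assms(1) by simp
  have Esq: "exp (-2*\<beta>) = E^2" unfolding E_def by (simp add: power2_eq_square exp_add[symmetric])
  have Esq': "exp (-(2*\<beta>)) = E^2" using Esq by simp
  define D where "D = 1 + E^2"
  define G where "G = (1 - E^2)^2"
  have zz: "z = sqrt (D^2 - \<alpha>^2 * G)" unfolding zdef Esq D_def G_def ..
  define X1 where "X1 = D^2 + \<alpha>*G - 2*E*z"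
  define X0 where "X0 = D^2 - \<alpha>*G - 2*E*z"
  note C = core[OF E0 E1 assms(2,3) D_def G_def zz X1_def X0_def]
  define w1 where "w1 = sqrt (X1/(4*D*G))"
  define w0 where "w0 = sqrt (X0/(4*D*G))"
  have Dp: "D > 0" unfolding D_def by (simp add: add_pos_nonneg)
  have E2: "E^2 < 1" using E0 E1 by (simp add: power_less_one_iff)
  have Gp: "G > 0" unfolding G_def using E2 by simp
  have w1p: "w1 > 0" unfolding w1_def using C(1) Dp Gp by simp
  have w0p: "w0 > 0" unfolding w0_def using C(2) Dp Gp by simp
  have eq1: "w1^2 * (1 + E^2) + 2*E*(w1*w0) = (1+\<alpha>)/4" using C(3) unfolding w1_def w0_def D_def .
  have eq0: "w0^2 * (1 + E^2) + 2*E*(w1*w0) = (1-\<alpha>)/4" using C(4) unfolding w1_def w0_def D_def .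
  have cpl: "coupling \<alpha> (mstar \<beta> w1 w0)"
    by (rule mstar_coupling[OF assms(2,3) w1p w0p _ Esq' eq1 eq0]) (simp add: E_def)
  define V where "V = 2 * (Lg \<alpha> w1 w0 True True * rho \<alpha> True True + Lg \<alpha> w1 w0 True False * rho \<alpha> True False
       + Lg \<alpha> w1 w0 False True * rho \<alpha> False True + Lg \<alpha> w1 w0 False False * rho \<alpha> False False)"
  have VF: "V = F"
  proof -
    have ap: "1 + \<alpha> > 0" "1 - \<alpha> > 0" using assms(2,3) by auto
    have l4: "ln (4::real) = 2 * ln 2"
      using ln_realpow[of 2 2] by simp
    have lDG: "ln (D*G) = ln D + ln G" using Dp Gp by (simp add: ln_mult)
    have lw1: "ln w1 = (ln X1 - 2 * ln 2 - ln D - ln G)/2"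
      unfolding w1_def using C(1) Dp Gp by (simp add: ln_sqrt ln_div ln_mult l4)
    have lw0: "ln w0 = (ln X0 - 2 * ln 2 - ln D - ln G)/2"
      unfolding w0_def using C(2) Dp Gp by (simp add: ln_sqrt ln_div ln_mult l4)
    have lr1: "ln ((1+\<alpha>)/4) = ln (1+\<alpha>) - 2 * ln 2" using ap by (simp add: ln_div l4)
    have lr0: "ln ((1-\<alpha>)/4) = ln (1-\<alpha>) - 2 * ln 2" using ap by (simp add: ln_div l4)
    have q1: "ln (w1 / ((1+\<alpha>)/4)) = ln w1 - ln ((1+\<alpha>)/4)" using w1p ap by (intro ln_divide_pos) auto
    have q0: "ln (w0 / ((1-\<alpha>)/4)) = ln w0 - ln ((1-\<alpha>)/4)" using w0p ap by (intro ln_divide_pos) auto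
    have VV: "V = (1+\<alpha>) * ln (w1 / ((1+\<alpha>)/4)) + (1-\<alpha>) * ln (w0 / ((1-\<alpha>)/4))"
      unfolding V_def Lg_def Wf_def rho_def by (simp add: algebra_simps)
    have FF: "F = 2 * ln 2 - ln (D*G) - (1 + \<alpha>) * ln (1 + \<alpha>) - (1 - \<alpha>) * ln (1 - \<alpha>)
      + (1 + \<alpha>) / 2 * ln X1 + (1 - \<alpha>) / 2 * ln X0"
      unfolding Fdef Esq X1_def X0_def D_def G_def E_def by simp
    show ?thesis unfolding VV FF q1 q0 lw1 lw0 lr1 lr0 lDG by (simp add: algebra_simps) (simp add: field_simps)
  qed
  have lower: "V \<le> gfun \<beta> \<alpha> \<mu>" if "coupling \<alpha> \<mu>" for \<mu>
  proof -
    have nn: "\<And>x. \<mu> x \<ge> 0" and s1: "(\<Sum>x\<in>UNIV. \<mu> x) = 1" using that unfolding coupling_def by auto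
    have s2: "(\<Sum>x\<in>UNIV. mstar \<beta> w1 w0 x) = 1" using cpl unfolding coupling_def by auto
    have "(\<Sum>x\<in>UNIV. \<mu> x * hfun \<alpha> w1 w0 x + \<mu> x - mstar \<beta> w1 w0 x) \<le> (\<Sum>x\<in>UNIV. Tf \<beta> \<alpha> \<mu> x)"
      by (rule sum_mono) (rule pointwise(1)[OF assms(2,3) w1p w0p nn])
    moreover have "(\<Sum>x\<in>UNIV. \<mu> x * hfun \<alpha> w1 w0 x + \<mu> x - mstar \<beta> w1 w0 x) = V"
      using marg_sum[OF that, of w1 w0] s1 s2 unfolding V_def by (simp add: sum.distrib sum_subtractf)
    ultimately show ?thesis using gfun_eq by simp
  qed
  have mnn: "\<And>x. mstar \<beta> w1 w0 x \<ge> 0" using cpl unfolding coupling_def by auto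
  have pw: "\<And>x. Tf \<beta> \<alpha> (mstar \<beta> w1 w0) x = mstar \<beta> w1 w0 x * hfun \<alpha> w1 w0 x"
    using pointwise(2)[OF assms(2,3) w1p w0p mnn] by blast
  have "gfun \<beta> \<alpha> (mstar \<beta> w1 w0) = V"
    unfolding gfun_eq V_def pw using marg_sum[OF cpl, of w1 w0] by simp
  thus ?thesis using cpl lower VF by auto
qed
end
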